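(* Let $G_1$ and $G_2$ be graphs on $n$ nodes with Laplacian matrices $Q_1,Q_2$, and for $p\ge0$ let $$Q(p)=\begin{bmatrix} Q_1+pnI & -pJ\\ -pJ & Q_2+pnI\end{bmatrix},$$ where $J$ is the $n\times n$ all-one matrix (an $n$-to-$n$ interconnection), with eigenvalues $0=\mu_N(p)\le\mu_{N-1}(p)\le\dots\le\mu_1(p)$, $N=2n$. Define $p^*=\sup\big(\{0\}\cup\{p>0:\ \mu_{N-1}(p)=2np\}\big)$. Then $$p^*=\min\left\{\frac{\mu_{n-1}(Q_1)}{n},\ \frac{\mu_{n-1}(Q_2)}{n}\right\},$$ where $\mu_{n-1}(Q_i)$ is the second smallest eigenvalue of $Q_i$.
   Context: $2np$ is an eigenvalue of $Q(p)$ with eigenvector $[u^T,-u^T]^T$, $u$ the all-one vector; $p^*$ is the structural transition threshold, described in the paper as the coupling beyond which the algebraic connectivity $\mu_{N-1}$ no longer equals $2np$ (formalized here as the supremum). *)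

theory Defs
  imports "Jordan_Normal_Form.Char_Poly" "HOL-Computational_Algebra.Polynomial"
begin

text \<open>A simple undirected graph on the vertex set {0..<n}: a symmetric, irreflexive
  adjacency relation (only its restriction to {0..<n} matters).\<close>
definition simple_graph :: "nat \<Rightarrow> (nat \<Rightarrow> nat \<Rightarrow> bool) \<Rightarrow> bool" where
  "simple_graph n E \<longleftrightarrow> (\<forall>i<n. \<forall>j<n. E i j \<longleftrightarrow> E j i) \<and> (\<forall>i<n. \<not> E i i)"

definition laplacian :: "nat \<Rightarrow> (nat \<Rightarrow> nat \<Rightarrow> bool) \<Rightarrow> real mat" where
  "laplacian n E = mat n n (\<lambda>(i,j). if i = j then real (card {k. k < n \<and> E i k})
                                     else if E i j then -1 else 0)"

definition ones_mat :: "nat \<Rightarrow> real mat" where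
  "ones_mat n = mat n n (\<lambda>_. 1)"

definition coupled_mat :: "nat \<Rightarrow> real mat \<Rightarrow> real mat \<Rightarrow> real \<Rightarrow> real mat" where
  "coupled_mat n Q1 Q2 p =
     four_block_mat (Q1 + (p * real n) \<cdot>\<^sub>m 1\<^sub>m n) ((- p) \<cdot>\<^sub>m ones_mat n)
                    ((- p) \<cdot>\<^sub>m ones_mat n) (Q2 + (p * real n) \<cdot>\<^sub>m 1\<^sub>m n)"

definition sorted_eigs :: "real mat \<Rightarrow> real list" where
  "sorted_eigs A = sorted_list_of_multiset (proots (char_poly A))"

definition second_smallest_eig :: "real mat \<Rightarrow> real" where
  "second_smallest_eig A = sorted_eigs A ! 1"

definition p_star :: "nat \<Rightarrow> real mat \<Rightarrow> real mat \<Rightarrow> real" where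
  "p_star n Q1 Q2 = Sup ({0} \<union> {p. p > 0 \<and> second_smallest_eig (coupled_mat n Q1 Q2 p) = 2 * real n * p})"

end

theory Submission
  imports Defs
begin

lemma det_I_minus_tJ:
  assumes n: "n \<ge> 1"
  shows "det (1\<^sub>m n - t \<cdot>\<^sub>m ones_mat n) = 1 - t * real n"
proof -
  define P :: "real mat" where "P = mat n n (\<lambda>(i,j). if j = n-1 then 1 else if i = j then 1 else 0)"
  define E :: "real mat" where "E = mat n n (\<lambda>(i,j). if i = n-1 then (if j = n-1 then real n else 1) else 0)"
  have P: "P \<in> carrier_mat n n" and E: "E \<in> carrier_mat n n" unfolding P_def E_def by auto
  have J: "ones_mat n \<in> carrier_mat n n" unfolding ones_mat_def by auto
  have JP: "ones_mat n * P = P * E"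
  proof (rule eq_matI)
    fix i j assume i: "i < dim_row (P * E)" and j: "j < dim_col (P * E)"
    hence i: "i < n" and j: "j < n" using P E by auto
    have "(ones_mat n * P) $$ (i,j) = (\<Sum>k<n. P $$ (k,j))"
      using i j P by (simp add: ones_mat_def scalar_prod_def lessThan_atLeast0)
    also have "\<dots> = (if j = n-1 then real n else 1)"
      using j by (simp add: P_def)
    finally have 1: "(ones_mat n * P) $$ (i,j) = (if j = n-1 then real n else 1)" .
    have "(P * E) $$ (i,j) = (\<Sum>k<n. P $$ (i,k) * E $$ (k,j))"
      using i j P E by (simp add: scalar_prod_def lessThan_atLeast0)
    also have "\<dots> = (\<Sum>k<n. if k = n-1 then E $$ (n-1,j) else 0)"
      by (rule sum.cong, auto simp: P_def E_def i j)
    also have "\<dots> = E $$ (n-1,j)" using n by simp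
    also have "\<dots> = (if j = n-1 then real n else 1)" using n j by (simp add: E_def)
    finally show "(ones_mat n * P) $$ (i,j) = (P * E) $$ (i,j)" using 1 by simp
  qed (use P E in \<open>auto simp: ones_mat_def\<close>)
  have eq: "(1\<^sub>m n - t \<cdot>\<^sub>m ones_mat n) * P = P * (1\<^sub>m n - t \<cdot>\<^sub>m E)"
  proof -
    have "(1\<^sub>m n - t \<cdot>\<^sub>m ones_mat n) * P = 1\<^sub>m n * P - (t \<cdot>\<^sub>m ones_mat n) * P"
      by (rule minus_mult_distrib_mat[OF _ _ P], use J in auto)
    also have "\<dots> = P - t \<cdot>\<^sub>m (ones_mat n * P)" using P J by (simp add: mult_smult_assoc_mat)
    also have "\<dots> = P * 1\<^sub>m n - P * (t \<cdot>\<^sub>m E)" unfolding JP using P E by (simp add: mult_smult_distrib)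
    also have "\<dots> = P * (1\<^sub>m n - t \<cdot>\<^sub>m E)"
      by (rule mult_minus_distrib_mat[symmetric, OF P], use E in auto)
    finally show ?thesis .
  qed
  have detP: "det P = 1"
  proof -
    have "upper_triangular P" unfolding upper_triangular_def P_def by auto
    hence "det P = prod_list (diag_mat P)" using det_upper_triangular P by blast
    also have "\<dots> = 1" unfolding diag_mat_def P_def
      by (rule prod_list_neutral) auto
    finally show ?thesis .
  qed
  have detE: "det (1\<^sub>m n - t \<cdot>\<^sub>m E) = 1 - t * real n"
  proof -
    let ?M = "transpose_mat (1\<^sub>m n - t \<cdot>\<^sub>m E)"
    have M: "1\<^sub>m n - t \<cdot>\<^sub>m E \<in> carrier_mat n n" using E by auto
    have "det (1\<^sub>m n - t \<cdot>\<^sub>m E) = det ?M" using det_transpose[OF M] by simp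
    also have "upper_triangular ?M" unfolding upper_triangular_def using E by (auto simp: E_def)
    hence "det ?M = prod_list (diag_mat ?M)" using det_upper_triangular[of ?M n] M by auto
    also have "diag_mat ?M = map (\<lambda>i. if i = n-1 then 1 - t * real n else 1) [0..<n]"
      unfolding diag_mat_def using E by (auto simp: E_def)
    also have "prod_list \<dots> = (\<Prod>i<n. if i = n-1 then 1 - t * real n else 1)"
      by (simp add: prod.list_conv_set_nth lessThan_atLeast0)
    also have "\<dots> = 1 - t * real n" using n by simp
    finally show ?thesis .
  qed
  have c1: "1\<^sub>m n - t \<cdot>\<^sub>m ones_mat n \<in> carrier_mat n n" and c2: "1\<^sub>m n - t \<cdot>\<^sub>m E \<in> carrier_mat n n"
    using J E by auto
  have "det ((1\<^sub>m n - t \<cdot>\<^sub>m ones_mat n) * P) = det (P * (1\<^sub>m n - t \<cdot>\<^sub>m E))" by (simp add: eq)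
  thus ?thesis unfolding det_mult[OF c1 P] det_mult[OF P c2] detP detE by simp
qed


lemma second_sorted:
  fixes M :: "real multiset"
  assumes "M \<noteq> {#}" "\<And>x. x \<in># M \<Longrightarrow> a \<le> x"
  shows "sorted_list_of_multiset (add_mset a M) ! 1 = Min (set_mset M)"
proof -
  define L where "L = sorted_list_of_multiset M"
  have "insort a L = a # L" unfolding L_def
    by (rule insort_is_Cons) (use assms in auto)
  hence "sorted_list_of_multiset (add_mset a M) ! 1 = L ! 0" unfolding L_def by simp
  moreover obtain b L' where L: "L = b # L'" using assms(1) unfolding L_def
    by (metis list.exhaust mset_sorted_list_of_multiset mset_zero_iff_right)
  moreover have "sorted L" unfolding L_def by simp
  moreover have "set L = set_mset M" unfolding L_def by simp
  ultimately show ?thesis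
    by (metis Min_insert2 finite_set list.set(2) nth_Cons_0 sorted_simps(2))
qed

lemma lap_carrier: "laplacian n E \<in> carrier_mat n n"
  unfolding laplacian_def by auto

lemma lap_index: "i < n \<Longrightarrow> j < n \<Longrightarrow> laplacian n E $$ (i,j) =
   (if i = j then real (card {k. k < n \<and> E i k}) else if E i j then -1 else 0)"
  unfolding laplacian_def by auto

lemma lap_sym: assumes "simple_graph n E" "i < n" "j < n"
  shows "laplacian n E $$ (i,j) = laplacian n E $$ (j,i)"
  using assms unfolding lap_index[OF assms(2,3)] lap_index[OF assms(3,2)] simple_graph_def by auto

lemma lap_row_mult: assumes "simple_graph n E" "i < n"
  shows "(\<Sum>k<n. laplacian n E $$ (i,k) * v k) =
    real (card {k. k < n \<and> E i k}) * v i - (\<Sum>k\<in>{k. k < n \<and> E i k}. v k)"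
proof -
  have nE: "\<not> E i i" using assms unfolding simple_graph_def by auto
  have "(\<Sum>k<n. laplacian n E $$ (i,k) * v k) =
     (\<Sum>k<n. (if k = i then real (card {k. k < n \<and> E i k}) * v i else 0) + (if E i k then - v k else 0))"
    by (rule sum.cong, auto simp: lap_index assms nE)
  also have "\<dots> = real (card {k. k < n \<and> E i k}) * v i + (\<Sum>k<n. if E i k then - v k else 0)"
    using assms by (simp add: sum.distrib)
  also have "(\<Sum>k<n. if E i k then - v k else 0) = - (\<Sum>k\<in>{k. k < n \<and> E i k}. v k)"
    by (simp add: sum.If_cases sum_negf lessThan_def Int_def conj_commute)
  finally show ?thesis by simp
qed

lemma lap_row_sum: assumes "simple_graph n E" "i < n"
  shows "(\<Sum>k<n. laplacian n E $$ (i,k)) = 0"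
  using lap_row_mult[OF assms, of "\<lambda>_. 1"] by simp

lemma lap_col_sum: assumes "simple_graph n E" "j < n"
  shows "(\<Sum>k<n. laplacian n E $$ (k,j)) = 0"
  using lap_row_sum[OF assms] lap_sym[OF assms(1) _ assms(2)] by (metis (no_types, lifting) lessThan_iff sum.cong)

lemma lap_J: assumes "simple_graph n E"
  shows "laplacian n E * ones_mat n = 0\<^sub>m n n" "ones_mat n * laplacian n E = 0\<^sub>m n n"
proof -
  have L: "laplacian n E \<in> carrier_mat n n" by (rule lap_carrier)
  show "laplacian n E * ones_mat n = 0\<^sub>m n n"
  proof (rule eq_matI)
    fix i j assume "i < dim_row (0\<^sub>m n n :: real mat)" "j < dim_col (0\<^sub>m n n :: real mat)"
    hence i: "i < n" and j: "j < n" by auto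
    have "(laplacian n E * ones_mat n) $$ (i,j) = (\<Sum>k<n. laplacian n E $$ (i,k))"
      using L i j by (simp add: ones_mat_def scalar_prod_def lessThan_atLeast0)
    also have "\<dots> = 0" by (rule lap_row_sum[OF assms i])
    finally show "(laplacian n E * ones_mat n) $$ (i,j) = 0\<^sub>m n n $$ (i,j)" using i j by simp
  qed (use L in \<open>auto simp: ones_mat_def\<close>)
  show "ones_mat n * laplacian n E = 0\<^sub>m n n"
  proof (rule eq_matI)
    fix i j assume "i < dim_row (0\<^sub>m n n :: real mat)" "j < dim_col (0\<^sub>m n n :: real mat)"
    hence i: "i < n" and j: "j < n" by auto
    have "(ones_mat n * laplacian n E) $$ (i,j) = (\<Sum>k<n. laplacian n E $$ (k,j))"
      using L i j by (simp add: ones_mat_def scalar_prod_def lessThan_atLeast0)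
    also have "\<dots> = 0" by (rule lap_col_sum[OF assms j])
    finally show "(ones_mat n * laplacian n E) $$ (i,j) = 0\<^sub>m n n $$ (i,j)" using i j by simp
  qed (use L in \<open>auto simp: ones_mat_def\<close>)
qed

lemma lap_eig_nonneg: assumes "simple_graph n E" and "poly (char_poly (laplacian n E)) lam = 0"
  shows "lam \<ge> 0"
proof -
  let ?L = "laplacian n E"
  have "eigenvalue ?L lam" using eigenvalue_root_char_poly[OF lap_carrier] assms(2) by blast
  then obtain v where v: "v \<in> carrier_vec n" "v \<noteq> 0\<^sub>v n" "?L *\<^sub>v v = lam \<cdot>\<^sub>v v"
    unfolding eigenvalue_def eigenvector_def using lap_carrier[of n E] by auto
  have n: "n > 0"
  proof (rule ccontr)
    assume "\<not> n > 0"
    hence "v = 0\<^sub>v n" using v(1) by (intro eq_vecI) auto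
    thus False using v(2) by simp
  qed
  obtain i where i: "i < n" "\<And>k. k < n \<Longrightarrow> \<bar>v $ k\<bar> \<le> \<bar>v $ i\<bar>"
  proof -
    have "finite ((\<lambda>k. \<bar>v $ k\<bar>) ` {..<n})" "(\<lambda>k. \<bar>v $ k\<bar>) ` {..<n} \<noteq> {}" using n by auto
    from Max_in[OF this] obtain i where "i < n" "\<bar>v $ i\<bar> = Max ((\<lambda>k. \<bar>v $ k\<bar>) ` {..<n})" by auto
    moreover have "\<And>k. k < n \<Longrightarrow> \<bar>v $ k\<bar> \<le> Max ((\<lambda>k. \<bar>v $ k\<bar>) ` {..<n})"
      by (rule Max_ge) auto
    ultimately show ?thesis using that by metis
  qed
  have vi: "v $ i \<noteq> 0"
  proof
    assume "v $ i = 0"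
    hence "\<And>k. k < n \<Longrightarrow> v $ k = 0" using i by (metis abs_le_zero_iff abs_zero)
    hence "v = 0\<^sub>v n" using v(1) by (intro eq_vecI) auto
    thus False using v(2) by simp
  qed
  define N where "N = {k. k < n \<and> E i k}"
  have fN: "finite N" unfolding N_def by auto
  have "(?L *\<^sub>v v) $ i = (\<Sum>k<n. ?L $$ (i,k) * v $ k)"
    using i v(1) lap_carrier[of n E] by (simp add: scalar_prod_def lessThan_atLeast0 mult.commute)
  also have "\<dots> = real (card N) * v $ i - (\<Sum>k\<in>N. v $ k)" unfolding N_def
    by (rule lap_row_mult[OF assms(1) i(1)])
  finally have "(real (card N) - lam) * v $ i = (\<Sum>k\<in>N. v $ k)"
    using v(3) i v(1) by (simp add: algebra_simps)
  hence "\<bar>real (card N) - lam\<bar> * \<bar>v $ i\<bar> = \<bar>\<Sum>k\<in>N. v $ k\<bar>" by (metis abs_mult)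
  also have "\<dots> \<le> (\<Sum>k\<in>N. \<bar>v $ k\<bar>)" by (rule sum_abs)
  also have "\<dots> \<le> (\<Sum>k\<in>N. \<bar>v $ i\<bar>)" by (rule sum_mono, use i N_def in auto)
  also have "\<dots> = real (card N) * \<bar>v $ i\<bar>" by simp
  finally have "\<bar>real (card N) - lam\<bar> \<le> real (card N)" using vi by simp
  thus ?thesis by simp
qed


lemma sym_eig_real:
  fixes A :: "real mat"
  assumes A: "A \<in> carrier_mat n n" and sym: "\<And>i j. i < n \<Longrightarrow> j < n \<Longrightarrow> A $$ (i,j) = A $$ (j,i)"
    and z: "poly (map_poly complex_of_real (char_poly A)) z = 0"
  shows "Im z = 0"
proof -
  let ?A = "map_mat complex_of_real A"
  have Ac: "?A \<in> carrier_mat n n" using A by auto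
  have "char_poly ?A = map_poly complex_of_real (char_poly A)"
    by (rule of_real_hom.char_poly_hom[OF A])
  hence "eigenvalue ?A z" using eigenvalue_root_char_poly[OF Ac] z by simp
  then obtain v where v: "v \<in> carrier_vec n" "v \<noteq> 0\<^sub>v n" "?A *\<^sub>v v = z \<cdot>\<^sub>v v"
    unfolding eigenvalue_def eigenvector_def using Ac by auto
  have row: "\<And>i. i < n \<Longrightarrow> (\<Sum>j<n. complex_of_real (A $$ (i,j)) * v $ j) = z * v $ i"
  proof -
    fix i assume i: "i < n"
    have "(?A *\<^sub>v v) $ i = (\<Sum>j<n. complex_of_real (A $$ (i,j)) * v $ j)"
      using i v(1) A by (simp add: scalar_prod_def lessThan_atLeast0)
    thus "(\<Sum>j<n. complex_of_real (A $$ (i,j)) * v $ j) = z * v $ i" using v(3) i v(1) by simp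
  qed
  define S where "S = (\<Sum>i<n. \<Sum>j<n. cnj (v $ i) * complex_of_real (A $$ (i,j)) * v $ j)"
  define s where "s = (\<Sum>i<n. (cmod (v $ i))^2)"
  have S1: "S = z * complex_of_real s"
  proof -
    have "S = (\<Sum>i<n. cnj (v $ i) * (\<Sum>j<n. complex_of_real (A $$ (i,j)) * v $ j))"
      unfolding S_def by (simp add: sum_distrib_left mult.assoc)
    also have "\<dots> = (\<Sum>i<n. z * (cnj (v $ i) * v $ i))"
      by (rule sum.cong, simp, simp add: row)
    also have "\<dots> = (\<Sum>i<n. z * complex_of_real ((cmod (v $ i))^2))"
      by (rule sum.cong, simp, metis complex_norm_square mult.commute of_real_power)
    also have "\<dots> = z * (\<Sum>i<n. complex_of_real ((cmod (v $ i))^2))"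
      by (simp add: sum_distrib_left)
    finally show ?thesis unfolding s_def by simp
  qed
  have S2: "cnj S = S"
  proof -
    have "cnj S = (\<Sum>i<n. \<Sum>j<n. v $ i * complex_of_real (A $$ (i,j)) * cnj (v $ j))"
      unfolding S_def by (simp add: cnj_sum)
    also have "\<dots> = (\<Sum>j<n. \<Sum>i<n. v $ i * complex_of_real (A $$ (i,j)) * cnj (v $ j))"
      by (rule sum.swap)
    also have "\<dots> = S" unfolding S_def
      by (rule sum.cong, simp, rule sum.cong, simp, simp add: sym mult.commute mult.left_commute)
    finally show ?thesis .
  qed
  have spos: "s > 0"
  proof -
    obtain i where i: "i < n" "v $ i \<noteq> 0"
      using v(1,2) by (metis carrier_vecD eq_vecI index_zero_vec(1,2))
    have "(cmod (v $ i))^2 \<le> s" unfolding s_def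
      by (rule member_le_sum, use i in auto)
    moreover have "(cmod (v $ i))^2 > 0" using i by simp
    ultimately show ?thesis by linarith
  qed
  have "Im S = 0" using arg_cong[OF S2, of Im] by simp
  hence "Im z * s = 0" unfolding S1 by simp
  thus ?thesis using spos by simp
qed

lemma sym_factor_real_root:
  fixes A :: "real mat"
  assumes A: "A \<in> carrier_mat n n" and sym: "\<And>i j. i < n \<Longrightarrow> j < n \<Longrightarrow> A $$ (i,j) = A $$ (j,i)"
    and fac: "char_poly A = q * r" and deg: "degree r > 0"
  shows "\<exists>x. poly r x = 0"
proof -
  let ?r = "map_poly complex_of_real r"
  have "degree ?r > 0" using deg by simp
  hence "\<not> constant (poly ?r)" using constant_degree by (metis neq0_conv)
  then obtain z where z: "poly ?r z = 0" using fundamental_theorem_of_algebra by blast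
  interpret h: map_poly_comm_ring_hom complex_of_real by unfold_locales
  have "poly (map_poly complex_of_real (char_poly A)) z = 0"
    unfolding fac h.hom_mult using z by simp
  hence "Im z = 0" using sym_eig_real[OF A] sym by blast
  hence "z = complex_of_real (Re z)" by (simp add: complex_eq_iff)
  hence "complex_of_real (poly r (Re z)) = 0" using z by (metis of_real_hom.poly_map_poly)
  thus ?thesis by auto
qed


lemma ones_carrier[simp]: "ones_mat n \<in> carrier_mat n n" unfolding ones_mat_def by auto

lemma shiftJ:
  fixes Q :: "real mat"
  assumes Q: "Q \<in> carrier_mat n n"
    and rs: "\<And>i. i < n \<Longrightarrow> (\<Sum>k<n. Q $$ (i,k)) = 0"
    and cs: "\<And>j. j < n \<Longrightarrow> (\<Sum>k<n. Q $$ (k,j)) = 0"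
  shows "(-(Q + c \<cdot>\<^sub>m 1\<^sub>m n)) * ones_mat n = (-c) \<cdot>\<^sub>m ones_mat n"
    "ones_mat n * (-(Q + c \<cdot>\<^sub>m 1\<^sub>m n)) = (-c) \<cdot>\<^sub>m ones_mat n"
proof -
  show "(-(Q + c \<cdot>\<^sub>m 1\<^sub>m n)) * ones_mat n = (-c) \<cdot>\<^sub>m ones_mat n"
  proof (rule eq_matI)
    fix i j assume "i < dim_row ((-c) \<cdot>\<^sub>m ones_mat n)" "j < dim_col ((-c) \<cdot>\<^sub>m ones_mat n)"
    hence i: "i < n" and j: "j < n" by (auto simp: ones_mat_def)
    have "((-(Q + c \<cdot>\<^sub>m 1\<^sub>m n)) * ones_mat n) $$ (i,j) = - (\<Sum>k<n. Q $$ (i,k) + c * (if k = i then 1 else 0))"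
      using Q i j by (simp add: ones_mat_def scalar_prod_def lessThan_atLeast0)
    also have "\<dots> = - (\<Sum>k<n. Q $$ (i,k)) - (\<Sum>k<n. c * (if k = i then 1 else 0))"
      by (simp add: sum.distrib)
    also have "(\<Sum>k<n. c * (if k = i then 1 else 0)) = c"
      using i by (simp add: sum_distrib_left[symmetric])
    also have "- (\<Sum>k<n. Q $$ (i,k)) - c = - c" using rs[OF i] by simp
    finally show "((-(Q + c \<cdot>\<^sub>m 1\<^sub>m n)) * ones_mat n) $$ (i,j) = ((-c) \<cdot>\<^sub>m ones_mat n) $$ (i,j)"
      using i j by (simp add: ones_mat_def)
  qed (use Q in \<open>auto simp: ones_mat_def\<close>)
  show "ones_mat n * (-(Q + c \<cdot>\<^sub>m 1\<^sub>m n)) = (-c) \<cdot>\<^sub>m ones_mat n"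
  proof (rule eq_matI)
    fix i j assume "i < dim_row ((-c) \<cdot>\<^sub>m ones_mat n)" "j < dim_col ((-c) \<cdot>\<^sub>m ones_mat n)"
    hence i: "i < n" and j: "j < n" by (auto simp: ones_mat_def)
    have "(ones_mat n * (-(Q + c \<cdot>\<^sub>m 1\<^sub>m n))) $$ (i,j) = - (\<Sum>k<n. Q $$ (k,j) + c * (if k = j then 1 else 0))"
      using Q i j by (simp add: ones_mat_def scalar_prod_def lessThan_atLeast0)
    also have "\<dots> = - (\<Sum>k<n. Q $$ (k,j)) - (\<Sum>k<n. c * (if k = j then 1 else 0))"
      by (simp add: sum.distrib)
    also have "(\<Sum>k<n. c * (if k = j then 1 else 0)) = c"
      using j by (simp add: sum_distrib_left[symmetric])
    also have "- (\<Sum>k<n. Q $$ (k,j)) - c = - c" using cs[OF j] by simp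
    finally show "(ones_mat n * (-(Q + c \<cdot>\<^sub>m 1\<^sub>m n))) $$ (i,j) = ((-c) \<cdot>\<^sub>m ones_mat n) $$ (i,j)"
      using i j by (simp add: ones_mat_def)
  qed (use Q in \<open>auto simp: ones_mat_def\<close>)
qed

lemma JJ: "ones_mat n * ones_mat n = real n \<cdot>\<^sub>m ones_mat n"
  by (rule eq_matI, auto simp: ones_mat_def scalar_prod_def)

lemma coupled_block:
  fixes Q1 Q2 :: "real mat"
  assumes Q1: "Q1 \<in> carrier_mat n n" and Q2: "Q2 \<in> carrier_mat n n"
  shows "- char_matrix (coupled_mat n Q1 Q2 p) k =
    four_block_mat (- char_matrix Q1 (k - p * real n)) (p \<cdot>\<^sub>m ones_mat n) (p \<cdot>\<^sub>m ones_mat n)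
                   (- char_matrix Q2 (k - p * real n))"
  by (rule eq_matI, insert Q1 Q2, auto simp: coupled_mat_def char_matrix_def ones_mat_def algebra_simps)


lemma coupled_poly:
  fixes Q1 Q2 :: "real mat"
  assumes Q1: "Q1 \<in> carrier_mat n n" and Q2: "Q2 \<in> carrier_mat n n"
    and rs1: "\<And>i. i < n \<Longrightarrow> (\<Sum>k<n. Q1 $$ (i,k)) = 0"
    and cs1: "\<And>j. j < n \<Longrightarrow> (\<Sum>k<n. Q1 $$ (k,j)) = 0"
    and rs2: "\<And>i. i < n \<Longrightarrow> (\<Sum>k<n. Q2 $$ (i,k)) = 0"
    and cs2: "\<And>j. j < n \<Longrightarrow> (\<Sum>k<n. Q2 $$ (k,j)) = 0"
    and n: "n \<ge> 1" and y: "y = k - p * real n" "y \<noteq> 0"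
  shows "poly (char_poly (coupled_mat n Q1 Q2 p)) k =
     poly (char_poly Q1) y * poly (char_poly Q2) y * (1 - (p^2 * real n / y^2) * real n)"
proof -
  let ?J = "ones_mat n"
  define A where "A = - char_matrix Q1 y"
  define D where "D = - char_matrix Q2 y"
  define B where "B = p \<cdot>\<^sub>m ?J"
  define t where "t = p^2 * real n / y^2"
  have M: "coupled_mat n Q1 Q2 p \<in> carrier_mat (n+n) (n+n)"
    unfolding coupled_mat_def using Q1 Q2 by (auto simp: ones_mat_def)
  have A: "A \<in> carrier_mat n n" and D: "D \<in> carrier_mat n n" and B: "B \<in> carrier_mat n n"
    unfolding A_def D_def B_def using Q1 Q2 by auto
  have J: "?J \<in> carrier_mat n n" by simp
  have Adef: "A = - (Q1 + (-y) \<cdot>\<^sub>m 1\<^sub>m n)" unfolding A_def char_matrix_def using Q1 by simp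
  have Ddef: "D = - (Q2 + (-y) \<cdot>\<^sub>m 1\<^sub>m n)" unfolding D_def char_matrix_def using Q2 by simp
  have AJ: "A * ?J = y \<cdot>\<^sub>m ?J" using shiftJ(1)[OF Q1 rs1 cs1, of "-y"] unfolding Adef by simp
  have DJ: "D * ?J = y \<cdot>\<^sub>m ?J" using shiftJ(1)[OF Q2 rs2 cs2, of "-y"] unfolding Ddef by simp
  have JD: "?J * D = y \<cdot>\<^sub>m ?J" using shiftJ(2)[OF Q2 rs2 cs2, of "-y"] unfolding Ddef by simp
  have comm: "B * D = D * B"
  proof -
    have "B * D = p \<cdot>\<^sub>m (?J * D)" unfolding B_def using mult_smult_assoc_mat[OF J D] by simp
    also have "\<dots> = p \<cdot>\<^sub>m (D * ?J)" unfolding JD DJ ..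
    also have "\<dots> = D * B" unfolding B_def using mult_smult_distrib[OF D J] by simp
    finally show ?thesis .
  qed
  have "poly (char_poly (coupled_mat n Q1 Q2 p)) k = det (- char_matrix (coupled_mat n Q1 Q2 p) k)"
    by (rule char_poly_matrix[OF M])
  also have "\<dots> = det (four_block_mat A B B D)"
    unfolding coupled_block[OF Q1 Q2] A_def B_def D_def y(1) ..
  also have "\<dots> = det (A * D - B * B)"
    by (rule det_four_block_mat[OF A B B D comm])
  also have "A * D - B * B = (A * D) * (1\<^sub>m n - t \<cdot>\<^sub>m ?J)"
  proof -
    have AD: "A * D \<in> carrier_mat n n" using A D by simp
    have "(A * D) * (1\<^sub>m n - t \<cdot>\<^sub>m ?J) = (A * D) * 1\<^sub>m n - (A * D) * (t \<cdot>\<^sub>m ?J)"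
      by (rule mult_minus_distrib_mat[OF AD], auto)
    also have "(A * D) * (t \<cdot>\<^sub>m ?J) = t \<cdot>\<^sub>m (A * (D * ?J))"
      using mult_smult_distrib[OF AD J] A D J by simp
    also have "\<dots> = t \<cdot>\<^sub>m (y \<cdot>\<^sub>m (y \<cdot>\<^sub>m ?J))"
      unfolding DJ using mult_smult_distrib[OF A J] AJ by simp
    also have "\<dots> = (t * y * y) \<cdot>\<^sub>m ?J" by (rule eq_matI) (auto simp: ones_mat_def)
    also have "t * y * y = p * p * real n" unfolding t_def using y(2) by (simp add: power2_eq_square)
    also have "(p * p * real n) \<cdot>\<^sub>m ?J = B * B"
    proof -
      have "B * B = p \<cdot>\<^sub>m (?J * (p \<cdot>\<^sub>m ?J))" unfolding B_def
        using mult_smult_assoc_mat[of ?J n n "p \<cdot>\<^sub>m ?J" n p] J by simp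
      also have "\<dots> = p \<cdot>\<^sub>m (p \<cdot>\<^sub>m (?J * ?J))" using mult_smult_distrib[OF J J] by simp
      also have "\<dots> = (p * p * real n) \<cdot>\<^sub>m ?J" unfolding JJ by (rule eq_matI) (auto simp: ones_mat_def)
      finally show ?thesis by simp
    qed
    finally show ?thesis using right_mult_one_mat[OF AD] by simp
  qed
  also have "det ((A * D) * (1\<^sub>m n - t \<cdot>\<^sub>m ?J)) = det A * det D * (1 - t * real n)"
  proof -
    have AD: "A * D \<in> carrier_mat n n" using A D by simp
    have c: "1\<^sub>m n - t \<cdot>\<^sub>m ?J \<in> carrier_mat n n" using J by (intro minus_carrier_mat) auto
    show ?thesis unfolding det_mult[OF AD c] det_mult[OF A D] det_I_minus_tJ[OF n] ..
  qed
  also have "det A = poly (char_poly Q1) y" unfolding A_def by (rule char_poly_matrix[OF Q1, symmetric])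
  also have "det D = poly (char_poly Q2) y" unfolding D_def by (rule char_poly_matrix[OF Q2, symmetric])
  finally show ?thesis unfolding t_def .
qed


lemma lap_factor:
  assumes G: "simple_graph n E" and n: "n \<ge> 2"
  shows "char_poly (laplacian n E) = [:0,1:] * (char_poly (laplacian n E) div [:0,1:])"
    "degree (char_poly (laplacian n E) div [:0,1:]) = n - 1"
proof -
  let ?L = "laplacian n E"
  let ?u = "vec n (\<lambda>_. 1) :: real vec"
  have L: "?L \<in> carrier_mat n n" by (rule lap_carrier)
  have "?L *\<^sub>v ?u = 0 \<cdot>\<^sub>v ?u"
    by (rule eq_vecI, use L lap_row_sum[OF G] in \<open>auto simp: scalar_prod_def lessThan_atLeast0\<close>)
  moreover have "?u \<noteq> 0\<^sub>v n"
  proof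
    assume "?u = 0\<^sub>v n"
    hence "?u $ 0 = 0\<^sub>v n $ 0" by simp
    thus False using n by simp
  qed
  ultimately have "eigenvalue ?L 0" unfolding eigenvalue_def eigenvector_def using L
    by (intro exI[of _ ?u]) auto
  hence "poly (char_poly ?L) 0 = 0" using eigenvalue_root_char_poly[OF L] by blast
  hence "[:0,1:] dvd char_poly ?L" using poly_eq_0_iff_dvd[of "char_poly ?L" 0] by simp
  thus fac: "char_poly ?L = [:0,1:] * (char_poly ?L div [:0,1:])" by (metis dvd_mult_div_cancel)
  have d: "degree (char_poly ?L) = n" using degree_monic_char_poly[OF L] by simp
  have nz: "char_poly ?L div [:0,1:] \<noteq> 0"
  proof
    assume "char_poly ?L div [:0,1:] = 0"
    hence "char_poly ?L = 0" using fac by simp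
    thus False using d n by simp
  qed
  have "degree (char_poly ?L) = degree ([:0,1:] :: real poly) + degree (char_poly ?L div [:0,1:])"
    by (subst fac, rule degree_mult_eq, simp, rule nz)
  thus "degree (char_poly ?L div [:0,1:]) = n - 1" using d by simp
qed

lemma second_of_factor:
  fixes A :: "real mat"
  assumes fac: "char_poly A = [:0,1:] * R" and R: "R \<noteq> 0" and ex: "\<exists>x. poly R x = 0"
    and nn: "\<And>x. poly R x = 0 \<Longrightarrow> x \<ge> 0"
  shows "second_smallest_eig A = Min {x. poly R x = 0}"
proof -
  have "proots (char_poly A) = proots [:0,1:] + proots R"
    unfolding fac by (rule proots_mult, simp, rule R)
  also have "proots ([:0,1:] :: real poly) = {#0#}" using proots_linear_factor[of "0::real"] by simp
  finally have pr: "proots (char_poly A) = add_mset 0 (proots R)" by simp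
  have "sorted_list_of_multiset (add_mset 0 (proots R)) ! 1 = Min (set_mset (proots R))"
  proof (rule second_sorted)
    show "proots R \<noteq> {#}"
    proof
      assume "proots R = {#}"
      hence "set_mset (proots R) = {}" by simp
      thus False using ex R by simp
    qed
  qed (use R nn in auto)
  thus ?thesis unfolding second_smallest_eig_def sorted_eigs_def pr using R by simp
qed


lemma poly_eq_cofinite:
  fixes P Q :: "real poly"
  assumes "\<And>k. k \<noteq> c \<Longrightarrow> poly P k = poly Q k"
  shows "P = Q"
proof (rule ccontr)
  assume "P \<noteq> Q"
  hence "P - Q \<noteq> 0" by simp
  hence fin: "finite {x. poly (P - Q) x = 0}" by (rule poly_roots_finite)
  have "UNIV - {c} \<subseteq> {x. poly (P - Q) x = 0}" using assms by auto
  hence "finite (UNIV - {c} :: real set)" using fin finite_subset by blast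
  thus False by (simp add: infinite_UNIV_char_0)
qed

lemma lap_data:
  assumes G: "simple_graph n E" and n: "n \<ge> 2"
  defines "r \<equiv> char_poly (laplacian n E) div [:0,1:]"
  shows "char_poly (laplacian n E) = [:0,1:] * r" "r \<noteq> 0"
    "\<And>x. poly r x = 0 \<Longrightarrow> x \<ge> 0"
    "poly r (second_smallest_eig (laplacian n E)) = 0"
    "\<And>x. poly r x = 0 \<Longrightarrow> second_smallest_eig (laplacian n E) \<le> x"
    "second_smallest_eig (laplacian n E) \<ge> 0"
    "\<And>x. poly (char_poly (laplacian n E)) x = poly r x * x"
proof -
  let ?L = "laplacian n E"
  show fac: "char_poly ?L = [:0,1:] * r" unfolding r_def by (rule lap_factor(1)[OF G n])
  have deg: "degree r = n - 1" unfolding r_def by (rule lap_factor(2)[OF G n])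
  show r0: "r \<noteq> 0"
  proof
    assume "r = 0"
    hence "degree r = 0" by simp
    thus False using deg n by simp
  qed
  have sym: "\<And>i j. i < n \<Longrightarrow> j < n \<Longrightarrow> ?L $$ (i,j) = ?L $$ (j,i)" using lap_sym[OF G] by blast
  have dp: "degree r > 0" using deg n by simp
  have ex: "\<exists>x. poly r x = 0"
    by (rule sym_factor_real_root[OF lap_carrier sym fac dp])
  show nn: "\<And>x. poly r x = 0 \<Longrightarrow> x \<ge> 0"
  proof -
    fix x assume "poly r x = 0"
    hence "poly (char_poly ?L) x = 0" unfolding fac by simp
    thus "x \<ge> 0" by (rule lap_eig_nonneg[OF G])
  qed
  have sec: "second_smallest_eig ?L = Min {x. poly r x = 0}"
    by (rule second_of_factor[OF fac r0 ex nn])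
  have fin: "finite {x. poly r x = 0}" by (rule poly_roots_finite[OF r0])
  have ne: "{x. poly r x = 0} \<noteq> {}" using ex by auto
  show "poly r (second_smallest_eig ?L) = 0" unfolding sec using Min_in[OF fin ne] by simp
  show "\<And>x. poly r x = 0 \<Longrightarrow> second_smallest_eig ?L \<le> x" unfolding sec using fin by simp
  show "second_smallest_eig ?L \<ge> 0" unfolding sec using Min_in[OF fin ne] nn by simp
  show "\<And>x. poly (char_poly ?L) x = poly r x * x" unfolding fac by simp
qed


lemma coupled_key:
  assumes G1: "simple_graph n E1" and G2: "simple_graph n E2" and n: "n \<ge> 2" and p: "p > 0"
  shows "second_smallest_eig (coupled_mat n (laplacian n E1) (laplacian n E2) p) = 2 * real n * p
     \<longleftrightarrow> p * real n \<le> second_smallest_eig (laplacian n E1) \<and> p * real n \<le> second_smallest_eig (laplacian n E2)"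
proof -
  let ?L1 = "laplacian n E1" and ?L2 = "laplacian n E2"
  define r1 where "r1 = char_poly ?L1 div [:0,1:]"
  define r2 where "r2 = char_poly ?L2 div [:0,1:]"
  define l1 where "l1 = second_smallest_eig ?L1"
  define l2 where "l2 = second_smallest_eig ?L2"
  note d1 = lap_data[OF G1 n, folded r1_def l1_def]
  note d2 = lap_data[OF G2 n, folded r2_def l2_def]
  define c where "c = p * real n"
  have c0: "c > 0" unfolding c_def using p n by simp
  define R where "R = [:-(2*c),1:] * pcompose r1 [:-c,1:] * pcompose r2 [:-c,1:]"
  have polyR: "\<And>x. poly R x = (x - 2*c) * poly r1 (x - c) * poly r2 (x - c)"
    unfolding R_def by (simp add: poly_pcompose algebra_simps)
  have rs: "\<And>Q E i. simple_graph n E \<Longrightarrow> i < n \<Longrightarrow> (\<Sum>k<n. laplacian n E $$ (i,k)) = 0"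
    using lap_row_sum by blast
  have cs: "\<And>Q E j. simple_graph n E \<Longrightarrow> j < n \<Longrightarrow> (\<Sum>k<n. laplacian n E $$ (k,j)) = 0"
    using lap_col_sum by blast
  have fac: "char_poly (coupled_mat n ?L1 ?L2 p) = [:0,1:] * R"
  proof (rule poly_eq_cofinite[of c])
    fix k assume k: "k \<noteq> c"
    define y where "y = k - p * real n"
    have y0: "y \<noteq> 0" using k unfolding y_def c_def by simp
    have "poly (char_poly (coupled_mat n ?L1 ?L2 p)) k =
      poly (char_poly ?L1) y * poly (char_poly ?L2) y * (1 - (p^2 * real n / y^2) * real n)"
      by (rule coupled_poly[OF lap_carrier lap_carrier rs[OF G1] cs[OF G1] rs[OF G2] cs[OF G2]],
          use n y_def y0 in auto)
    also have "\<dots> = poly r1 y * poly r2 y * (y^2 - c^2)"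
      unfolding d1(7) d2(7) c_def using y0 by (simp add: field_simps power2_eq_square)
    also have "\<dots> = poly ([:0,1:] * R) k"
      unfolding y_def c_def[symmetric] by (simp add: polyR field_simps power2_eq_square)
    finally show "poly (char_poly (coupled_mat n ?L1 ?L2 p)) k = poly ([:0,1:] * R) k" .
  qed
  have lin: "degree [:-c,1::real:] > 0" by simp
  have p1: "pcompose r1 [:-c,1:] \<noteq> 0" using pcompose_eq_0[OF _ lin, of r1] d1(2) by blast
  have p2: "pcompose r2 [:-c,1:] \<noteq> 0" using pcompose_eq_0[OF _ lin, of r2] d2(2) by blast
  have p0: "[:-(2*c),1::real:] \<noteq> 0" by simp
  have R0: "R \<noteq> 0" unfolding R_def using p0 p1 p2 by (metis mult_eq_0_iff)
  define T where "T = {x. poly R x = 0}"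
  have finT: "finite T" unfolding T_def by (rule poly_roots_finite[OF R0])
  have cT: "2 * c \<in> T" unfolding T_def polyR by simp
  have nn: "\<And>x. poly R x = 0 \<Longrightarrow> x \<ge> 0"
  proof -
    fix x assume "poly R x = 0"
    hence "x = 2 * c \<or> poly r1 (x - c) = 0 \<or> poly r2 (x - c) = 0" unfolding polyR by auto
    thus "x \<ge> 0" using d1(3)[of "x - c"] d2(3)[of "x - c"] c0 by auto
  qed
  have sec: "second_smallest_eig (coupled_mat n ?L1 ?L2 p) = Min T"
    unfolding T_def by (rule second_of_factor[OF fac R0 _ nn], use cT T_def in auto)
  have iff1: "Min T = 2 * c \<longleftrightarrow> (\<forall>x\<in>T. 2 * c \<le> x)"
  proof
    assume "Min T = 2 * c" thus "\<forall>x\<in>T. 2 * c \<le> x" using finT Min_le by metis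
  next
    assume a: "\<forall>x\<in>T. 2 * c \<le> x"
    have "Min T \<le> 2 * c" using finT cT by simp
    moreover have "2 * c \<le> Min T" using finT cT a by (subst Min_ge_iff) auto
    ultimately show "Min T = 2 * c" by simp
  qed
  have iff2: "(\<forall>x\<in>T. 2 * c \<le> x) \<longleftrightarrow> c \<le> l1 \<and> c \<le> l2"
  proof
    assume a: "\<forall>x\<in>T. 2 * c \<le> x"
    have "l1 + c \<in> T" unfolding T_def polyR using d1(4) by simp
    moreover have "l2 + c \<in> T" unfolding T_def polyR using d2(4) by simp
    ultimately show "c \<le> l1 \<and> c \<le> l2" using a by force
  next
    assume a: "c \<le> l1 \<and> c \<le> l2"
    show "\<forall>x\<in>T. 2 * c \<le> x"
    proof
      fix x assume "x \<in> T"
      hence "x = 2 * c \<or> poly r1 (x - c) = 0 \<or> poly r2 (x - c) = 0" unfolding T_def polyR by auto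
      thus "2 * c \<le> x" using d1(5)[of "x - c"] d2(5)[of "x - c"] a by auto
    qed
  qed
  have e: "2 * real n * p = 2 * c" unfolding c_def by simp
  show ?thesis unfolding sec e iff1 iff2 by (simp add: c_def l1_def l2_def)
qed


theorem mainTheorem4:
  fixes n :: nat and E1 E2 :: "nat \<Rightarrow> nat \<Rightarrow> bool"
  assumes "n \<ge> 2"
    and "simple_graph n E1" and "simple_graph n E2"
  shows "p_star n (laplacian n E1) (laplacian n E2)
       = min (second_smallest_eig (laplacian n E1) / real n)
             (second_smallest_eig (laplacian n E2) / real n)"
proof -
  let ?l1 = "second_smallest_eig (laplacian n E1)" and ?l2 = "second_smallest_eig (laplacian n E2)"
  define m where "m = min (?l1 / real n) (?l2 / real n)"
  have npos: "real n > 0" using assms(1) by simp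
  have m0: "m \<ge> 0" unfolding m_def using lap_data(6)[OF assms(2,1)] lap_data(6)[OF assms(3,1)] by simp
  have S: "{0} \<union> {p. p > 0 \<and> second_smallest_eig (coupled_mat n (laplacian n E1) (laplacian n E2) p) = 2 * real n * p}
      = {0} \<union> {p. p > 0 \<and> p \<le> m}"
  proof -
    have "\<And>p. p > 0 \<Longrightarrow> (p * real n \<le> ?l1 \<and> p * real n \<le> ?l2) \<longleftrightarrow> p \<le> m"
      unfolding m_def using npos by (simp add: pos_le_divide_eq)
    thus ?thesis using coupled_key[OF assms(2,3,1)] by auto
  qed
  have "Sup ({0} \<union> {p. p > 0 \<and> p \<le> m}) = m"
  proof (rule cSup_eq_maximum)
    show "m \<in> {0} \<union> {p. p > 0 \<and> p \<le> m}" using m0 by auto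
    show "\<And>x. x \<in> {0} \<union> {p. p > 0 \<and> p \<le> m} \<Longrightarrow> x \<le> m" using m0 by auto
  qed
  thus ?thesis unfolding p_star_def S m_def .
qed


end
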